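(* Suppose that $2\le n_0<\infty$ and that $S$ is submultiplicative on $[1,n_0]$. Then there exists $\varepsilon_0>0$ such that for all $0<\varepsilon<\varepsilon_0$ the extension $S_\varepsilon$ of $S$ to $[1,n_0^2]$ defined by $$S_\varepsilon(x)=\begin{cases}S(x),&1\le x\le n_0,\\ S(n_0)+\varepsilon(x-n_0),& n_0<x\le n_0^2,\end{cases}$$ is submultiplicative on $[1,n_0^2]$.
   Context: Let $2\le n_0\le\infty$ and let $S$ be a real-valued function on $[1,n_0]$ (on $[1,\infty)$ if $n_0=\infty$). $S$ is called submultiplicative on $[1,n_0]$ if: (a) $S$ is piecewise-linear, continuous, strictly increasing and concave; (b) $S(x)=x$ for $1\le x\le 2$; (c) $S(xy)\le S(x)S(y)$ for all $x,y$ with $1\le x,y,xy\le n_0$. *)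

theory Defs
  imports "HOL-Analysis.Analysis"
begin

definition piecewise_linear_on :: "real \<Rightarrow> real \<Rightarrow> (real \<Rightarrow> real) \<Rightarrow> bool" where
  "piecewise_linear_on a b S \<longleftrightarrow>
     (\<exists>P. finite P \<and> P \<subseteq> {a..b} \<and> a \<in> P \<and> b \<in> P \<and>
        (\<forall>u\<in>P. \<forall>v\<in>P. u < v \<and> (\<forall>w\<in>P. \<not> (u < w \<and> w < v)) \<longrightarrow>
            (\<exists>m c. \<forall>x\<in>{u..v}. S x = m * x + c)))"

definition submultiplicative_on :: "real \<Rightarrow> (real \<Rightarrow> real) \<Rightarrow> bool" where
  "submultiplicative_on n0 S \<longleftrightarrow>
     piecewise_linear_on 1 n0 S \<and> continuous_on {1..n0} S \<and>
     strict_mono_on {1..n0} S \<and> concave_on {1..n0} S \<and>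
     (\<forall>x\<in>{1..2}. S x = x) \<and>
     (\<forall>x y. 1 \<le> x \<and> 1 \<le> y \<and> x * y \<le> n0 \<longrightarrow> S (x * y) \<le> S x * S y)"

end

theory Submission
  imports Defs
begin

lemma chord:
  fixes f :: "real \<Rightarrow> real"
  assumes "concave_on I f" "a \<in> I" "b \<in> I" "a \<le> c" "c \<le> b" "a < b"
  shows "(f b - f a) * (c - a) \<le> (f c - f a) * (b - a)"
proof -
  define t where "t = (c-a)/(b-a)"
  have t: "0 \<le> t" "t \<le> 1" using assms by (auto simp: t_def field_simps)
  have tc: "t*(b-a) = c - a" using assms(6) by (simp add: t_def)
  have "(1 - t) *\<^sub>R a + t *\<^sub>R b = c" using tc by (simp add: algebra_simps)
  then have "f c \<ge> (1-t)*f a + t * f b" using concave_onD[OF assms(1) t assms(2,3)] by simp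
  then have "f c - f a \<ge> t*(f b - f a)" by (simp add: algebra_simps)
  then have "(f c - f a)*(b-a) \<ge> t*(f b - f a)*(b-a)" using assms(6) by (simp add: mult_right_mono)
  moreover have "(f b - f a)*(c-a) = t*(f b - f a)*(b-a)"
    by (subst tc[symmetric]) (simp add: algebra_simps)
  ultimately show ?thesis by linarith
qed

lemma arith1:
  fixes D d k Y E e :: real
  assumes "D*k \<le> E*d" "e*d \<le> D" "d>0" "k\<ge>0" "Y\<ge>0"
  shows "(D+e*Y)*k \<le> E*(d+Y)"
proof -
  have 1: "D*k*(d+Y) \<le> E*d*(d+Y)" using assms by (intro mult_right_mono) auto
  have 2: "e*d*(k*Y) \<le> D*(k*Y)" using assms by (intro mult_right_mono) auto
  have 3: "((D+e*Y)*k)*d = D*k*d + e*d*(k*Y)" by (simp add: algebra_simps)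
  have 4: "(E*(d+Y))*d = E*d*(d+Y)" by (simp add: algebra_simps)
  have 5: "D*k*(d+Y) = D*k*d + D*(k*Y)" by (simp add: algebra_simps)
  have "((D+e*Y)*k)*d \<le> (E*(d+Y))*d" using 1 2 3 4 5 by argo
  then show ?thesis using assms(3) by simp
qed

lemma arith2:
  fixes e ep Sx gc gy x y cc :: real
  assumes "gc - Sx = ep*(cc-x)+e" "gy - Sx = ep*(y-x)+e" "e\<ge>0" "cc \<le> y"
  shows "(gy - Sx)*(cc-x) \<le> (gc - Sx)*(y-x)"
proof -
  have "(ep*(cc-x)+e)*(y-x) - (ep*(y-x)+e)*(cc-x) = e*(y-cc)" by (simp add: algebra_simps)
  moreover have "e*(y-cc) \<ge> 0" using assms by simp
  ultimately show ?thesis using assms(1,2) by simp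
qed

lemma arith3:
  fixes an sy x y e m nn :: real
  assumes "m*(y-1) \<le> sy - 1" "1 \<le> sy" "1 \<le> an" "e*x \<le> m" "nn \<le> x" "1 \<le> y" "0 \<le> e"
  shows "an + e*(x*y - nn) \<le> (an + e*(x-nn)) * sy"
proof -
  have i: "(an+e*(x-nn)) * sy - (an + e*(x*y-nn)) = an*(sy-1) + (e*(x-nn))*(sy-y) - e*nn*(y-1)"
    by (simp add: algebra_simps)
  have 1: "(sy-1) \<le> an*(sy-1)" using assms mult_right_mono[of 1 an "sy-1"] by auto
  have 2: "(e*(x-nn))*(1-y) \<le> (e*(x-nn))*(sy-y)" using assms by (intro mult_left_mono) auto
  have 3: "(e*x)*(y-1) \<le> m*(y-1)" using assms by (intro mult_right_mono) auto
  have 4: "(e*(x-nn))*(1-y) - e*nn*(y-1) = -((e*x)*(y-1))" by (simp add: algebra_simps)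
  show ?thesis using i 1 2 3 4 assms(1) by linarith
qed

lemma arith4:
  fixes Sn Sx Sz Sy m y z e x n :: real
  assumes "Sn \<le> Sx*Sz" "m*(y-z) \<le> Sy - Sz" "1 \<le> Sx" "e*x \<le> m" "z \<le> y" "e \<ge> 0"
    "x*y - n = x*(y-z)" "0 \<le> m"
  shows "Sn + e*(x*y-n) \<le> Sx*Sy"
proof -
  have 0: "0 \<le> Sy - Sz" using assms mult_nonneg_nonneg[of m "y-z"] by linarith
  have 1: "(Sy-Sz) \<le> Sx*(Sy-Sz)" using assms 0 mult_right_mono[of 1 Sx "Sy-Sz"] by auto
  have 2: "(e*x)*(y-z) \<le> m*(y-z)" using assms by (intro mult_right_mono) auto
  have 3: "Sx*Sy = Sx*Sz + Sx*(Sy-Sz)" by (simp add: algebra_simps)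
  have 4: "e*(x*y-n) = (e*x)*(y-z)" using assms(7) by simp
  show ?thesis using 1 2 3 4 assms(1,2) by linarith
qed

theorem lemma2p2:
  fixes n0 :: real and S :: "real \<Rightarrow> real"
  assumes "2 \<le> n0"
    and "submultiplicative_on n0 S"
  shows "\<exists>\<epsilon>0>0. \<forall>\<epsilon>. 0 < \<epsilon> \<and> \<epsilon> < \<epsilon>0 \<longrightarrow>
           submultiplicative_on (n0^2)
             (\<lambda>x. if x \<le> n0 then S x else S n0 + \<epsilon> * (x - n0))"
proof -
  from assms(2) have pl: "piecewise_linear_on 1 n0 S" and cont: "continuous_on {1..n0} S"
    and smono: "strict_mono_on {1..n0} S" and conc: "concave_on {1..n0} S"
    and id12: "\<forall>x\<in>{1..2}. S x = x"
    and sm: "\<forall>x y. 1 \<le> x \<and> 1 \<le> y \<and> x * y \<le> n0 \<longrightarrow> S (x * y) \<le> S x * S y"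
    unfolding submultiplicative_on_def by auto
  from pl obtain P where P: "finite P" "P \<subseteq> {1..n0}" "1 \<in> P" "n0 \<in> P"
    and lin: "\<forall>u\<in>P. \<forall>v\<in>P. u < v \<and> (\<forall>w\<in>P. \<not> (u < w \<and> w < v)) \<longrightarrow>
            (\<exists>m c. \<forall>x\<in>{u..v}. S x = m * x + c)"
    unfolding piecewise_linear_on_def by blast
  define Q where "Q = {p\<in>P. p < n0}"
  have Qf: "finite Q" "Q \<noteq> {}" using P assms(1) by (auto simp: Q_def)
  define u where "u = Max Q"
  have "u \<in> Q" using Qf Max_in u_def by blast
  then have u: "u \<in> P" "u < n0" "1 \<le> u" using P by (auto simp: Q_def)
  have nob: "\<forall>w\<in>P. \<not> (u < w \<and> w < n0)"
    using Qf Max_ge u_def Q_def by fastforce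
  obtain m c where mc: "\<forall>x\<in>{u..n0}. S x = m*x + c"
    using lin u P nob by blast
  have n0gt: "n0 < n0^2" using assms(1) by (simp add: power2_eq_square)
  have mono_le: "\<And>x y. x\<in>{1..n0} \<Longrightarrow> y\<in>{1..n0} \<Longrightarrow> x \<le> y \<Longrightarrow> S x \<le> S y"
    using smono by (metis order_le_less strict_mono_onD)
  have "S u < S n0" using smono u by (auto intro: strict_mono_onD)
  moreover have "S u = m*u + c" "S n0 = m*n0 + c" using mc u by auto
  ultimately have "m*(n0 - u) > 0" by (simp add: algebra_simps)
  then have mpos: "m > 0" using u by (simp add: zero_less_mult_iff)
  have A: "m*(n0 - z) \<le> S n0 - S z" if z: "z\<in>{1..n0}" for z
  proof (cases "u \<le> z")
    case True then show ?thesis using mc z by (auto simp: algebra_simps)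
  next
    case False
    have ch: "(S n0 - S z) * (u - z) \<le> (S u - S z) * (n0 - z)"
      using chord[OF conc, of z n0 u] z False u by auto
    have Su: "S u = S n0 - m*(n0-u)" using mc u by (auto simp: algebra_simps)
    define D where "D = S n0 - S z"
    have e: "S u - S z = D - m*(n0-u)" using Su by (simp add: D_def)
    have "D * (u - z) \<le> (D - m*(n0-u)) * (n0 - z)" using ch[unfolded e D_def[symmetric]] .
    then have "m*(n0-u)*(n0-z) \<le> D*(n0-u)" by (simp add: algebra_simps)
    then have "(m*(n0-z))*(n0-u) \<le> D*(n0-u)" by (simp add: algebra_simps)
    then show ?thesis using u by (simp add: D_def)
  qed
  have B: "m*(y - z) \<le> S y - S z" if zy: "1 \<le> z" "z \<le> y" "y \<le> n0" for z y
  proof -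
    consider "y = n0" | "z = y" | "z < y \<and> y < n0" using zy by (cases "y = n0"; cases "z = y") auto
    then show ?thesis
    proof cases
      case 1 then show ?thesis using A that by auto
    next
      case 2 then show ?thesis by simp
    next
      case 3
      have ch: "(S n0 - S z) * (y - z) \<le> (S y - S z) * (n0 - z)"
        using chord[OF conc, of z n0 y] that 3 by auto
      have "m*(n0-z)*(y-z) \<le> (S n0 - S z) * (y - z)"
        using A[of z] that 3 by (intro mult_right_mono) auto
      with ch have "(m*(y-z))*(n0-z) \<le> (S y - S z) * (n0 - z)" by (simp add: algebra_simps)
      then show ?thesis using 3 by simp
    qed
  qed
  have S1: "S 1 = 1" using id12 by auto
  have Sge1: "S x \<ge> 1" if "x\<in>{1..n0}" for x using mono_le[of 1 x] that S1 assms(1) by auto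
  show ?thesis
  proof (intro exI[of _ "m / n0^2"] conjI allI impI)
    show "0 < m/n0^2" using mpos assms(1) by simp
    fix \<epsilon> assume "0 < \<epsilon> \<and> \<epsilon> < m/n0^2"
    then have eps: "0 < \<epsilon>" "\<epsilon> * n0^2 < m" using assms(1) by (auto simp: field_simps)
    have h1: "\<epsilon> * n0 \<le> \<epsilon> * n0^2" using eps n0gt by simp
    then have eps_n0: "\<epsilon> * n0 < m" using eps by linarith
    have h2: "\<epsilon> \<le> \<epsilon> * n0" using eps assms(1) by simp
    then have eps_m: "\<epsilon> < m" using eps_n0 by linarith
    define g where "g = (\<lambda>x. if x \<le> n0 then S x else S n0 + \<epsilon> * (x - n0))"
    have gS: "\<And>x. x \<le> n0 \<Longrightarrow> g x = S x" by (simp add: g_def)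
    have gL: "\<And>x. n0 \<le> x \<Longrightarrow> g x = S n0 + \<epsilon>*(x-n0)" by (simp add: g_def)
    have "submultiplicative_on (n0^2) g"
      unfolding submultiplicative_on_def
    proof (intro conjI)
      show "piecewise_linear_on 1 (n0\<^sup>2) g"
        unfolding piecewise_linear_on_def
      proof (intro exI[of _ "insert (n0^2) P"] conjI ballI impI)
        show "finite (insert (n0^2) P)" using P by simp
        show "insert (n0^2) P \<subseteq> {1..n0^2}" using P n0gt by auto
        show "1 \<in> insert (n0^2) P" using P by simp
        show "n0^2 \<in> insert (n0^2) P" by simp
        fix a b assume a: "a \<in> insert (n0^2) P" and b: "b \<in> insert (n0^2) P"
          and ab: "a < b \<and> (\<forall>w\<in>insert (n0^2) P. \<not> (a < w \<and> w < b))"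
        show "\<exists>m c. \<forall>x\<in>{a..b}. g x = m*x + c"
        proof (cases "b = n0^2")
          case True
          have "a \<le> n0" using a P ab True n0gt by auto
          moreover have "\<not> (a < n0)" using ab P True n0gt by auto
          ultimately have "a = n0" by simp
          then show ?thesis using True gL
            by (intro exI[of _ \<epsilon>] exI[of _ "S n0 - \<epsilon>*n0"]) (auto simp: algebra_simps)
        next
          case False
          then have bP: "b \<in> P" using b by simp
          then have bn: "b \<le> n0" using P by auto
          then have aP: "a \<in> P" using a ab n0gt by auto
          have "\<forall>w\<in>P. \<not> (a < w \<and> w < b)" using ab by auto
          then obtain m' c' where "\<forall>x\<in>{a..b}. S x = m'*x + c'" using lin aP bP ab by blast
          then show ?thesis using gS bn by (intro exI[of _ m'] exI[of _ c']) auto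
        qed
      qed
      show "continuous_on {1..n0\<^sup>2} g"
      proof -
        have e: "{1..n0^2} = {1..n0} \<union> {n0..n0^2}" using n0gt assms(1) by auto
        have "continuous_on {1..n0} g = continuous_on {1..n0} S"
          by (rule continuous_on_cong) (auto simp: gS)
        then have c1: "continuous_on {1..n0} g" using cont by simp
        have "continuous_on {n0..n0^2} g = continuous_on {n0..n0^2} (\<lambda>x. S n0 + \<epsilon>*(x-n0))"
          by (rule continuous_on_cong) (auto simp: gL)
        moreover have "continuous_on {n0..n0^2} (\<lambda>x. S n0 + \<epsilon>*(x-n0))"
          by (intro continuous_intros)
        ultimately have c2: "continuous_on {n0..n0^2} g" by simp
        show ?thesis unfolding e by (rule continuous_on_closed_Un) (use c1 c2 in auto)
      qed
      show "strict_mono_on {1..n0\<^sup>2} g"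
      proof (rule strict_mono_onI)
        fix r s assume r: "r \<in> {1..n0\<^sup>2}" and s: "s \<in> {1..n0\<^sup>2}" and rs: "r < s"
        show "g r < g s"
        proof (cases "s \<le> n0")
          case True then show ?thesis using strict_mono_onD[OF smono, of r s] r s rs gS by auto
        next
          case False
          then have gs: "g s = S n0 + \<epsilon>*(s-n0)" using gL by simp
          have pos: "\<epsilon>*(s-n0) > 0" using eps False by simp
          show ?thesis
          proof (cases "r \<le> n0")
            case True
            have "S r \<le> S n0" using mono_le r True assms(1) by auto
            then show ?thesis using gS True gs pos by auto
          next
            case False
            then have "\<epsilon>*(r-n0) < \<epsilon>*(s-n0)" using eps rs by simp
            then show ?thesis using gL False gs by simp
          qed
        qed
      qed
      show "concave_on {1..n0\<^sup>2} g"
      proof (rule concave_on_linorderI)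
        show "convex {1..n0\<^sup>2}" by (simp add: convex_real_interval)
        fix t x y :: real assume t: "0 < t" "t < 1" and x: "x \<in> {1..n0\<^sup>2}" and y: "y \<in> {1..n0\<^sup>2}"
          and xy: "x < y"
        define cc where "cc = (1-t)*x + t*y"
        have ccx: "cc - x = t*(y-x)" by (simp add: cc_def algebra_simps)
        have ycc: "y - cc = (1-t)*(y-x)" by (simp add: cc_def algebra_simps)
        have h3: "0 \<le> t*(y-x)" using t xy by auto
        have h4: "0 \<le> (1-t)*(y-x)" using t xy by auto
        have cxy1: "x \<le> cc" using ccx h3 by linarith
        have cxy2: "cc \<le> y" using ycc h4 by linarith
        note cxy = cxy1 cxy2
        have ch: "(g y - g x)*(cc - x) \<le> (g cc - g x)*(y-x)"
        proof -
          consider "y \<le> n0" | "n0 \<le> x" | "x < n0 \<and> n0 < y" by linarith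
          then show ?thesis
          proof cases
            case 1
            then show ?thesis using chord[OF conc, of x y cc] x y xy cxy gS by auto
          next
            case 2
            have "g y - g x = \<epsilon>*(y-x)" "g cc - g x = \<epsilon>*(cc-x)"
              using gL[of x] gL[of y] gL[of cc] 2 cxy xy by (simp_all add: algebra_simps)
            then show ?thesis by (simp only:) (simp add: algebra_simps)
          next
            case 3
            have gx: "g x = S x" using gS 3 by simp
            have gy: "g y = S n0 + \<epsilon>*(y-n0)" using gL 3 by simp
            have "m*(n0-x) \<le> S n0 - S x" using A x 3 by auto
            moreover have "\<epsilon>*(n0-x) \<le> m*(n0-x)" using eps_m 3 by (intro mult_right_mono) auto
            ultimately have Sx: "\<epsilon>*(n0-x) \<le> S n0 - S x" by linarith
            show ?thesis
            proof (cases "cc \<le> n0")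
              case True
              have chS: "(S n0 - S x)*(cc-x) \<le> (S cc - S x)*(n0-x)"
                using chord[OF conc, of x n0 cc] x 3 cxy True assms(1) by auto
              have ff: "((S n0 - S x) + \<epsilon>*(y-n0))*(cc-x) \<le> (S cc - S x)*((n0-x)+(y-n0))"
                by (rule arith1[OF chS Sx]) (use 3 cxy in auto)
              have e1: "(S n0 - S x) + \<epsilon>*(y-n0) = S n0 + \<epsilon>*(y-n0) - S x" by simp
              have e2: "(n0-x)+(y-n0) = y-x" by simp
              show ?thesis using ff[unfolded e1 e2] unfolding gx gy gS[OF True] .
            next
              case False
              have gc: "g cc = S n0 + \<epsilon>*(cc-n0)" using gL False by simp
              show ?thesis
                by (rule arith2[where ep=\<epsilon> and e="S n0 - \<epsilon>*(n0-x) - S x"])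
                   (use gc gx gy Sx cxy in \<open>auto simp: algebra_simps\<close>)
            qed
          qed
        qed
        have eqq: "(g y - g x)*(cc - x) = t*(g y - g x)*(y-x)" by (simp only: ccx mult_ac)
        have "(t*(g y - g x))*(y-x) \<le> (g cc - g x)*(y-x)" using ch eqq by linarith
        then have "t*(g y - g x) \<le> g cc - g x" using xy by simp
        moreover have "(1 - t) *\<^sub>R x + t *\<^sub>R y = cc" by (simp add: cc_def)
        ultimately show "(1 - t) * g x + t * g y \<le> g ((1 - t) *\<^sub>R x + t *\<^sub>R y)"
          by (simp add: algebra_simps)
      qed
      show "\<forall>x\<in>{1..2}. g x = x" using id12 gS assms(1) by auto
      have big: "g (x*y) \<le> g x * g y" if H: "1 \<le> x" "1 \<le> y" "x*y \<le> n0^2" "n0 < x" for x y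
      proof -
        have xxy: "x \<le> x*y" using H mult_left_mono[of 1 y x] by auto
        have yn: "y \<le> n0"
        proof (rule ccontr)
          assume "\<not> y \<le> n0"
          then have "n0*n0 < x*y" using H assms(1) by (intro mult_strict_mono) auto
          then show False using H by (simp add: power2_eq_square)
        qed
        have gxy: "g (x*y) = S n0 + \<epsilon>*(x*y - n0)" using xxy H by (intro gL) linarith
        have gx: "g x = S n0 + \<epsilon>*(x - n0)" using H by (intro gL) linarith
        have gy: "g y = S y" using gS yn by simp
        have xn2: "x \<le> n0^2" using xxy H by linarith
        have "\<epsilon>*x \<le> \<epsilon>*n0^2" using eps xn2 by simp
        then have ex: "\<epsilon>*x \<le> m" using eps by linarith
        have "m*(y-1) \<le> S y - 1" using B[of 1 y] H yn S1 by auto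
        then show ?thesis unfolding gxy gx gy
          by (rule arith3) (use H ex eps Sge1[of y] Sge1[of n0] yn assms(1) in auto)
      qed
      show "\<forall>x y. 1 \<le> x \<and> 1 \<le> y \<and> x * y \<le> n0\<^sup>2 \<longrightarrow> g (x * y) \<le> g x * g y"
      proof (intro allI impI)
        fix x y assume H: "1 \<le> x \<and> 1 \<le> y \<and> x * y \<le> n0\<^sup>2"
        have xxy: "x \<le> x*y" using H mult_left_mono[of 1 y x] by auto
        have yxy: "y \<le> x*y" using H mult_right_mono[of 1 x y] by auto
        show "g (x * y) \<le> g x * g y"
        proof (cases "x*y \<le> n0")
          case True
          then have "x \<le> n0" "y \<le> n0" using xxy yxy by linarith+
          then show ?thesis using sm H True gS by auto
        next
          case False
          show ?thesis
          proof (cases "n0 < x")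
            case True then show ?thesis using big H by auto
          next
            case xn: False
            show ?thesis
            proof (cases "n0 < y")
              case True then show ?thesis using big[of y x] H by (auto simp: mult.commute)
            next
              case yn: False
              define z where "z = n0 / x"
              have xpos: "x > 0" using H by simp
              have xz: "x*z = n0" using xpos by (simp add: z_def)
              have z1: "1 \<le> z" using xn xpos by (simp add: z_def field_simps)
              have zy: "z < y" using False xpos by (simp add: z_def field_simps)
              have Sn: "S n0 \<le> S x * S z" using sm H z1 xz by (metis order_refl)
              have Bz: "m*(y-z) \<le> S y - S z" using B[of z y] z1 zy yn by auto
              have "\<epsilon>*x \<le> \<epsilon>*n0" using eps xn by simp
              then have ex: "\<epsilon>*x \<le> m" using eps_n0 by linarith
              have gxy: "g (x*y) = S n0 + \<epsilon>*(x*y - n0)" using gL False by simp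
              have "S n0 + \<epsilon>*(x*y - n0) \<le> S x * S y"
                by (rule arith4[OF Sn Bz]) (use Sge1[of x] H xn ex zy eps mpos xz in \<open>auto simp: algebra_simps\<close>)
              then show ?thesis using gxy gS xn yn by simp
            qed
          qed
        qed
      qed
    qed
    then show "submultiplicative_on (n0^2) (\<lambda>x. if x \<le> n0 then S x else S n0 + \<epsilon> * (x - n0))"
      by (simp add: g_def)
  qed
qed

end
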